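(* Let $\tau_1=(V,E_1)$ and $\tau_2=(V,E_2)$ be two rooted trees on the same finite vertex set $V$ having the same multi-index, i.e. every vertex $v\in V$ has the same number of children in $\tau_1$ as in $\tau_2$. Then there exists a bijection $\sigma$ of $V$ such that $\sigma.\tau_1=\tau_2$.
   Context: A rooted tree on a finite vertex set $V\subset\mathbb{N}$ is a set $E$ of ordered pairs of elements of $V$ (an edge $(v,w)$ means $w$ is a child of $v$) such that exactly one vertex $r$ (the root) has no parent, every other vertex has exactly one parent, and every vertex is connected to the root by following parents. For a bijection $\sigma$ of $V$ and a rooted tree $\tau=(V,E)$, set $E_\sigma=\{(v,\sigma(w)):(v,w)\in E\}$ and $\sigma.\tau=(V,E_\sigma)$; the equality $\sigma.\tau_1=\tau_2$ means $(E_1)_\sigma=E_2$. *)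

theory Defs
  imports Main
begin

definition rooted_tree :: "nat set \<Rightarrow> (nat \<times> nat) set \<Rightarrow> bool" where
  "rooted_tree V E \<longleftrightarrow> finite V \<and> E \<subseteq> V \<times> V \<and>
     (\<exists>!r. r \<in> V \<and> \<not> (\<exists>v. (v, r) \<in> E)) \<and>
     (\<forall>w\<in>V. (\<exists>v. (v, w) \<in> E) \<longrightarrow> (\<exists>!v. (v, w) \<in> E)) \<and>
     (\<forall>r\<in>V. \<not> (\<exists>v. (v, r) \<in> E) \<longrightarrow> (\<forall>w\<in>V. (r, w) \<in> E\<^sup>*))"

definition children :: "(nat \<times> nat) set \<Rightarrow> nat \<Rightarrow> nat set" where
  "children E v = {w. (v, w) \<in> E}"

definition act_edges :: "(nat \<Rightarrow> nat) \<Rightarrow> (nat \<times> nat) set \<Rightarrow> (nat \<times> nat) set" where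
  "act_edges \<sigma> E = {(v, \<sigma> w) | v w. (v, w) \<in> E}"

end

theory Submission
  imports Defs
begin

lemma rt_facts:
  assumes "rooted_tree V E"
  obtains r where "finite V" "E \<subseteq> V \<times> V" "r \<in> V" "\<And>v. (v, r) \<notin> E"
    "\<And>w. w \<in> V \<Longrightarrow> w \<noteq> r \<Longrightarrow> \<exists>v. (v, w) \<in> E"
    "\<And>w v v'. (v, w) \<in> E \<Longrightarrow> (v', w) \<in> E \<Longrightarrow> v = v'"
proof -
  from assms have f: "finite V" "E \<subseteq> V \<times> V" and u: "\<exists>!r. r \<in> V \<and> \<not> (\<exists>v. (v, r) \<in> E)"
    and p: "\<forall>w\<in>V. (\<exists>v. (v, w) \<in> E) \<longrightarrow> (\<exists>!v. (v, w) \<in> E)"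
    unfolding rooted_tree_def by auto
  from u obtain r where r: "r \<in> V" "\<not> (\<exists>v. (v, r) \<in> E)" and ru: "\<And>x. x \<in> V \<and> \<not> (\<exists>v. (v, x) \<in> E) \<Longrightarrow> x = r"
    by blast
  show ?thesis
  proof (rule that[of r])
    show "\<And>w. w \<in> V \<Longrightarrow> w \<noteq> r \<Longrightarrow> \<exists>v. (v, w) \<in> E" using ru by blast
    show "\<And>w v v'. (v, w) \<in> E \<Longrightarrow> (v', w) \<in> E \<Longrightarrow> v = v'"
      using p f(2) by blast
  qed (use f r in auto)
qed

theorem proposition3p6:
  fixes V :: "nat set" and E1 E2 :: "(nat \<times> nat) set"
  assumes "rooted_tree V E1" and "rooted_tree V E2"
    and "\<forall>v\<in>V. card (children E1 v) = card (children E2 v)"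
  shows "\<exists>\<sigma>. bij_betw \<sigma> V V \<and> act_edges \<sigma> E1 = E2"
proof -
  obtain r1 where fin: "finite V" and s1: "E1 \<subseteq> V \<times> V" and r1: "r1 \<in> V" "\<And>v. (v, r1) \<notin> E1"
    and ex1: "\<And>w. w \<in> V \<Longrightarrow> w \<noteq> r1 \<Longrightarrow> \<exists>v. (v, w) \<in> E1"
    and un1: "\<And>w v v'. (v, w) \<in> E1 \<Longrightarrow> (v', w) \<in> E1 \<Longrightarrow> v = v'"
    by (rule rt_facts[OF assms(1)]) blast
  obtain r2 where "finite V" and s2: "E2 \<subseteq> V \<times> V" and r2: "r2 \<in> V" "\<And>v. (v, r2) \<notin> E2"
    and "\<And>w. w \<in> V \<Longrightarrow> w \<noteq> r2 \<Longrightarrow> \<exists>v. (v, w) \<in> E2"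
    and un2: "\<And>w v v'. (v, w) \<in> E2 \<Longrightarrow> (v', w) \<in> E2 \<Longrightarrow> v = v'"
    by (rule rt_facts[OF assms(2)]) blast
  have "\<forall>v. \<exists>f. bij_betw f (children E1 v) (children E2 v)"
  proof
    fix v
    show "\<exists>f. bij_betw f (children E1 v) (children E2 v)"
    proof (cases "v \<in> V")
      case True
      have "children E1 v \<subseteq> V" "children E2 v \<subseteq> V" using s1 s2 unfolding children_def by auto
      hence "finite (children E1 v)" "finite (children E2 v)" using fin finite_subset by auto
      then show ?thesis using True assms(3) finite_same_card_bij by blast
    next
      case False
      hence "children E1 v = {}" "children E2 v = {}" using s1 s2 unfolding children_def by auto
      then show ?thesis by (metis bij_betw_id)
    qed
  qed
  then obtain F where F: "\<And>v. bij_betw (F v) (children E1 v) (children E2 v)" by metis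
  define par where "par w = (THE v. (v, w) \<in> E1)" for w
  have par: "(v, w) \<in> E1 \<Longrightarrow> par w = v" for v w
    unfolding par_def using un1 by blast
  define \<sigma> where "\<sigma> w = (if w = r1 then r2 else F (par w) w)" for w
  have sig: "(v, w) \<in> E1 \<Longrightarrow> (v, \<sigma> w) \<in> E2 \<and> \<sigma> w = F v w" for v w
  proof -
    assume a: "(v, w) \<in> E1"
    hence "w \<noteq> r1" using r1 by blast
    hence "\<sigma> w = F v w" using par[OF a] unfolding \<sigma>_def by simp
    moreover have "F v w \<in> children E2 v" using F[of v] a unfolding bij_betw_def children_def by auto
    ultimately show ?thesis unfolding children_def by auto
  qed
  have act: "act_edges \<sigma> E1 = E2"
  proof
    show "act_edges \<sigma> E1 \<subseteq> E2" unfolding act_edges_def using sig by auto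
    show "E2 \<subseteq> act_edges \<sigma> E1"
    proof
      fix p assume p: "p \<in> E2"
      obtain v u where pu: "p = (v, u)" by fastforce
      have "u \<in> children E2 v" using p pu unfolding children_def by auto
      hence "u \<in> F v ` children E1 v" using F[of v] by (simp add: bij_betw_def)
      then obtain w where w: "w \<in> children E1 v" "F v w = u" by (rule imageE) simp
      hence "(v, w) \<in> E1" unfolding children_def by auto
      hence "\<sigma> w = u" using sig w(2) by simp
      with \<open>(v, w) \<in> E1\<close> pu show "p \<in> act_edges \<sigma> E1" unfolding act_edges_def by blast
    qed
  qed
  have img: "\<sigma> ` V \<subseteq> V"
  proof
    fix x assume "x \<in> \<sigma> ` V"
    then obtain w where w: "w \<in> V" "x = \<sigma> w" by blast
    show "x \<in> V"
    proof (cases "w = r1")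
      case True then show ?thesis using w r2 unfolding \<sigma>_def by simp
    next
      case False
      then obtain v where "(v, w) \<in> E1" using ex1 w by blast
      then show ?thesis using sig s2 w by blast
    qed
  qed
  have inj: "inj_on \<sigma> V"
  proof
    fix x y assume x: "x \<in> V" and y: "y \<in> V" and e: "\<sigma> x = \<sigma> y"
    have nr: "z \<in> V \<Longrightarrow> z \<noteq> r1 \<Longrightarrow> \<exists>v. (v, z) \<in> E1 \<and> (v, \<sigma> z) \<in> E2 \<and> \<sigma> z = F v z" for z
      using ex1 sig by blast
    show "x = y"
    proof (cases "x = r1"; cases "y = r1")
      assume "x = r1" "y \<noteq> r1"
      then show ?thesis using nr[OF y] e r2 unfolding \<sigma>_def by auto
    next
      assume "x \<noteq> r1" "y = r1"
      then show ?thesis using nr[OF x] e r2 unfolding \<sigma>_def by auto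
    next
      assume a: "x \<noteq> r1" "y \<noteq> r1"
      obtain v where v: "(v, x) \<in> E1" "(v, \<sigma> x) \<in> E2" "\<sigma> x = F v x" using nr[OF x a(1)] by blast
      obtain v' where v': "(v', y) \<in> E1" "(v', \<sigma> y) \<in> E2" "\<sigma> y = F v' y" using nr[OF y a(2)] by blast
      have "v = v'" using un2 v(2) v'(2) e by metis
      hence "F v x = F v y" using v v' e by simp
      moreover have "x \<in> children E1 v" "y \<in> children E1 v" using v v' \<open>v = v'\<close> unfolding children_def by auto
      ultimately show ?thesis using F[of v] unfolding bij_betw_def inj_on_def by blast
    qed simp
  qed
  have "bij_betw \<sigma> V V" using inj img fin endo_inj_surj unfolding bij_betw_def by blast
  with act show ?thesis by blast
qed

end
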